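(* Let $n\ge 3$ and let $C\in\mathbb{R}^{n\times n}$ be nonnegative, doubly stochastic, irreducible, with zero diagonal entries. Consider the map $F(x)=C^\top x+\mathrm{diag}(x)x-C^\top\mathrm{diag}(x)x$ on the simplex $\Delta$. Then the set of points $x\in\Delta$ with $F(x)=x$ is exactly $\{e_1,\dots,e_n,\tfrac{1}{n}\mathbf{1}\}$; in particular, $\tfrac1n\mathbf 1$ is the unique equilibrium of the Modified DeGroot-Friedkin model $x(s+1)=F(x(s))$ in $\Delta$ other than $e_1,\dots,e_n$.
   Context: $\Delta=\{x\in\mathbb{R}^n: x\ge 0,\ \sum_i x_i=1\}$; $e_i$ is the $i$th standard basis vector; $\mathbf 1$ is the all-ones vector. Doubly stochastic means nonnegative with all row sums and all column sums equal to $1$. *)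

theory Defs
  imports "HOL-Analysis.Analysis"
begin

definition prob_simplex :: "(real ^ 'n) set" where
  "prob_simplex = {x. (\<forall>i. x $ i \<ge> 0) \<and> (\<Sum>i\<in>UNIV. x $ i) = 1}"

definition nonneg_matrix :: "real ^ 'n ^ 'n \<Rightarrow> bool" where
  "nonneg_matrix C \<longleftrightarrow> (\<forall>i j. C $ i $ j \<ge> 0)"

definition doubly_stochastic :: "real ^ 'n ^ 'n \<Rightarrow> bool" where
  "doubly_stochastic C \<longleftrightarrow> nonneg_matrix C \<and>
     (\<forall>i. (\<Sum>j\<in>UNIV. C $ i $ j) = 1) \<and> (\<forall>j. (\<Sum>i\<in>UNIV. C $ i $ j) = 1)"

definition irreducible_matrix :: "real ^ 'n ^ 'n \<Rightarrow> bool" where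
  "irreducible_matrix C \<longleftrightarrow> (\<forall>i j. (i, j) \<in> {(a, b). C $ a $ b \<noteq> 0}\<^sup>+)"

definition diag_vec :: "real ^ 'n \<Rightarrow> real ^ 'n ^ 'n" where
  "diag_vec x = (\<chi> i j. if i = j then x $ i else 0)"

definition mDF_map :: "real ^ 'n ^ 'n \<Rightarrow> real ^ 'n \<Rightarrow> real ^ 'n" where
  "mDF_map C x = transpose C *v x + diag_vec x *v x - transpose C *v (diag_vec x *v x)"

definition std_basis :: "'n \<Rightarrow> real ^ 'n" where
  "std_basis i = (\<chi> j. if j = i then 1 else 0)"

end

theory Submission
  imports Defs
begin

lemma mDF_comp:
  "mDF_map C x $ i = (\<Sum>j\<in>UNIV. C$j$i * (x$j - x$j * x$j)) + x$i * x$i"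
proof -
  have d: "(diag_vec x *v x) $ k = x$k * x$k" for k
  proof -
    have "(diag_vec x *v x) $ k = (\<Sum>j\<in>UNIV. (if k = j then x$k else 0) * x$j)"
      by (simp add: diag_vec_def matrix_vector_mult_def)
    also have "\<dots> = (\<Sum>j\<in>UNIV. if j = k then x$k * x$k else 0)"
      by (rule sum.cong) auto
    finally show ?thesis by simp
  qed
  have t: "(transpose C *v v) $ k = (\<Sum>j\<in>UNIV. C$j$k * v$j)" for v :: "real^'a" and k
    by (simp add: matrix_vector_mult_def transpose_def)
  have "mDF_map C x $ i = (transpose C *v x)$i + (diag_vec x *v x)$i - (transpose C *v (diag_vec x *v x))$i"
    by (simp add: mDF_map_def)
  also have "\<dots> = (\<Sum>j\<in>UNIV. C$j$i * x$j) + x$i * x$i - (\<Sum>j\<in>UNIV. C$j$i * (x$j * x$j))"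
    by (simp only: t d)
  also have "\<dots> = (\<Sum>j\<in>UNIV. C$j$i * (x$j - x$j * x$j)) + x$i * x$i"
    by (simp add: right_diff_distrib sum_subtractf)
  finally show ?thesis .
qed

lemma const_fix:
  fixes C :: "real ^ 'n ^ 'n" and y :: "'n \<Rightarrow> real"
  assumes nn: "\<forall>i j. C$i$j \<ge> 0" and cs: "\<forall>j. (\<Sum>i\<in>UNIV. C $ i $ j) = 1"
    and irr: "irreducible_matrix C"
    and fx: "\<forall>i. y i = (\<Sum>j\<in>UNIV. C$j$i * y j)"
  shows "y a = y b"
proof -
  define M where "M = Max (range y)"
  have le: "y k \<le> M" for k unfolding M_def by simp
  obtain i0 where i0: "y i0 = M" unfolding M_def
    by (metis (mono_tags, lifting) Max_in UNIV_not_empty finite finite_imageI image_iff image_is_empty)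
  have edge: "y a = M" if "y b = M" "C$a$b \<noteq> 0" for a b
  proof -
    have e1: "(\<Sum>j\<in>UNIV. C$j$b * (M - y j)) = M * (\<Sum>j\<in>UNIV. C$j$b) - (\<Sum>j\<in>UNIV. C$j$b * y j)"
      by (simp add: right_diff_distrib left_diff_distrib sum_subtractf sum_distrib_left mult.commute)
    have e2: "(\<Sum>j\<in>UNIV. C$j$b * y j) = M" using fx that(1) by metis
    have e3: "(\<Sum>j\<in>UNIV. C$j$b) = 1" using cs by blast
    have s0: "(\<Sum>j\<in>UNIV. C$j$b * (M - y j)) = 0" by (simp only: e1 e2 e3)
    have "\<forall>j\<in>UNIV. C$j$b * (M - y j) = 0"
    proof -
      have nnt: "\<forall>j\<in>UNIV. 0 \<le> C$j$b * (M - y j)"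
        using nn le by (simp add: mult_nonneg_nonneg)
      show ?thesis using sum_nonneg_eq_0_iff[OF finite, of UNIV "\<lambda>j. C$j$b * (M - y j)"] nnt s0
        by blast
    qed
    hence "C$a$b * (M - y a) = 0" by simp
    thus ?thesis using that(2) by simp
  qed
  have tr: "(p, q) \<in> {(a, b). C $ a $ b \<noteq> 0}\<^sup>+ \<Longrightarrow> y q = M \<Longrightarrow> y p = M" for p q
  proof (induction rule: converse_trancl_induct)
    case (base u) then show ?case using edge[of q u] by simp
  next
    case (step u v) then show ?case using edge[of v u] by simp
  qed
  have "(a, i0) \<in> {(a, b). C $ a $ b \<noteq> 0}\<^sup>+" "(b, i0) \<in> {(a, b). C $ a $ b \<noteq> 0}\<^sup>+"
    using irr unfolding irreducible_matrix_def by blast+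
  hence "y a = M" "y b = M" using tr i0 by blast+
  thus ?thesis by simp
qed

theorem theorem3:
  fixes C :: "real ^ 'n ^ 'n"
  assumes "CARD('n) \<ge> 3"
    and "nonneg_matrix C"
    and "doubly_stochastic C"
    and "irreducible_matrix C"
    and "\<forall>i. C $ i $ i = 0"
  shows "{x \<in> prob_simplex. mDF_map C x = x} =
           range std_basis \<union> {(\<chi> i. 1 / real CARD('n))}"
proof -
  have nn: "\<forall>i j. C$i$j \<ge> 0" using assms(2) unfolding nonneg_matrix_def .
  have cs: "\<forall>j. (\<Sum>i\<in>UNIV. C $ i $ j) = 1" using assms(3) unfolding doubly_stochastic_def by blast
  show ?thesis
  proof (intro equalityI subsetI)
    fix x assume "x \<in> {x \<in> prob_simplex. mDF_map C x = x}"
    hence x0: "\<forall>i. x$i \<ge> 0" and xs: "(\<Sum>i\<in>UNIV. x$i) = 1" and fp: "mDF_map C x = x"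
      unfolding prob_simplex_def by auto
    define y where "y j = x$j - x$j * x$j" for j
    have "\<forall>i. y i = (\<Sum>j\<in>UNIV. C$j$i * y j)"
    proof
      fix i
      have "x$i = (\<Sum>j\<in>UNIV. C$j$i * y j) + x$i * x$i"
        using mDF_comp[of C x i] fp y_def by simp
      thus "y i = (\<Sum>j\<in>UNIV. C$j$i * y j)" unfolding y_def by simp
    qed
    hence yc: "y a = y b" for a b using const_fix[OF nn cs assms(4)] by blast
    have xle: "x$k \<le> 1" for k
    proof -
      have "x$k \<le> (\<Sum>i\<in>UNIV. x$i)"
        by (rule member_le_sum) (use x0 in auto)
      thus ?thesis using xs by simp
    qed
    show "x \<in> range std_basis \<union> {(\<chi> i. 1 / real CARD('n))}"
    proof (cases "\<forall>i j. x$i = x$j")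
      case True
      then obtain c where c: "\<forall>i. x$i = c" by blast
      hence "real CARD('n) * c = 1" using xs by simp
      hence "c = 1 / real CARD('n)" by (simp add: field_simps)
      hence "x = (\<chi> i. 1 / real CARD('n))" using c by (simp add: vec_eq_iff)
      thus ?thesis by simp
    next
      case False
      then obtain i j where ij: "x$i \<noteq> x$j" by blast
      hence inj: "i \<noteq> j" by auto
      have "(x$i - x$j) * (1 - x$i - x$j) = 0" using yc[of i j] unfolding y_def
        by (simp add: algebra_simps)
      hence s1: "x$i + x$j = 1" using ij by simp
      obtain k where k: "k \<noteq> i" "k \<noteq> j"
      proof -
        have "CARD('n) > card {i, j}" using assms(1) inj by simp
        hence "UNIV - {i,j} \<noteq> {}"
          by (metis Diff_eq_empty_iff card_mono finite leD top_greatest)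
        thus ?thesis using that by blast
      qed
      have "(\<Sum>l\<in>UNIV. x$l) = x$i + x$j + (\<Sum>l\<in>UNIV - {i,j}. x$l)"
        using inj by (simp add: sum.remove[of UNIV i] sum.remove[of "UNIV - {i}" j] Diff_insert2[symmetric] insert_commute)
      hence "(\<Sum>l\<in>UNIV - {i,j}. x$l) = 0" using xs s1 by simp
      hence "\<forall>l\<in>UNIV - {i,j}. x$l = 0" by (subst (asm) sum_nonneg_eq_0_iff) (use x0 in auto)
      hence "x$k = 0" using k by simp
      hence y0: "y l = 0" for l using yc[of l k] by (simp add: y_def)
      have b: "x$l = 0 \<or> x$l = 1" for l using y0[of l] unfolding y_def
        by (metis diff_zero mult.commute mult_cancel_left1 eq_iff_diff_eq_0 right_diff_distrib mult_zero_right)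
      obtain m where m: "x$m = 1" using b s1 by (metis add.right_neutral add_0)
      have "x$l = 0" if "l \<noteq> m" for l
      proof -
        have "x$l \<le> (\<Sum>i\<in>UNIV-{m}. x$i)"
          by (rule member_le_sum) (use x0 that in auto)
        moreover have "(\<Sum>i\<in>UNIV. x$i) = x$m + (\<Sum>i\<in>UNIV-{m}. x$i)"
          by (simp add: sum.remove[of UNIV m])
        ultimately have "x$m + x$l \<le> (\<Sum>i\<in>UNIV. x$i)" by simp
        thus ?thesis using xs m x0 b[of l] by auto
      qed
      hence "x = std_basis m" using m by (auto simp: vec_eq_iff std_basis_def)
      thus ?thesis by simp
    qed
  next
    fix x :: "real ^ 'n" assume "x \<in> range std_basis \<union> {(\<chi> i. 1 / real CARD('n))}"
    then consider m where "x = std_basis m" | "x = (\<chi> i. 1 / real CARD('n))" by blast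
    thus "x \<in> {x \<in> prob_simplex. mDF_map C x = x}"
    proof cases
      case 1
      have h: "x$i * x$i = x$i" for i by (simp add: 1 std_basis_def)
      have "mDF_map C x $ i = x $ i" for i by (simp add: mDF_comp h)
      hence "mDF_map C x = x" by (simp add: vec_eq_iff)
      moreover have "x \<in> prob_simplex"
        by (simp add: prob_simplex_def 1 std_basis_def)
      ultimately show ?thesis by simp
    next
      case 2
      define a where "a = 1 / real CARD('n)"
      have xa: "x$j = a" for j by (simp add: 2 a_def)
      have "mDF_map C x $ i = x $ i" for i
      proof -
        have "(\<Sum>j\<in>UNIV. C$j$i * (x$j - x$j*x$j)) = (\<Sum>j\<in>UNIV. C$j$i) * (a - a*a)"
          by (simp add: xa sum_distrib_right)
        also have "\<dots> = a - a*a" using cs by simp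
        finally show ?thesis by (simp add: mDF_comp xa)
      qed
      hence "mDF_map C x = x" by (simp add: vec_eq_iff)
      moreover have "x \<in> prob_simplex"
        by (simp add: prob_simplex_def 2)
      ultimately show ?thesis by simp
    qed
  qed
qed

end
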